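(* Let $g_1:L_s\to[0,1]$ and $g_2:L_r\to[0,1]$ (with $s,r\ge2$ integers) be continuous encodings of $[0,1]$ with zero redundancy, and write $\Delta^{g_1}_{\alpha_1\alpha_2\dots}=g_1((\alpha_n))$, $\Delta^{g_2}_{\beta_1\beta_2\dots}=g_2((\beta_n))$. For each $n\ge1$ let $\varphi_n:A_s^n\to A_r$ be a function, and consider the rule $$\psi\big(x=\Delta^{g_1}_{\alpha_1\alpha_2\dots\alpha_n\dots}\big)=\Delta^{g_2}_{\beta_1\beta_2\dots\beta_n\dots},\qquad \beta_n=\varphi_n(\alpha_1,\dots,\alpha_n).$$ Then $\psi$ is (defined and) continuous at every point of $[0,1]$ if and only if $\psi$ is well defined at every $g_1$-binary point, i.e. for every $g_1$-binary point $x$ the two $g_1$-codes of $x$ yield the same value of the right-hand side.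
   Context: $A_s=\{0,1,\dots,s-1\}$ and $L_s=A_s\times A_s\times\cdots$ is the space of sequences over $A_s$ (similarly $A_r$, $L_r$). An encoding of $[0,1]$ with alphabet $A_s$ is a surjective map $g:L_s\to[0,1]$; if $g((\alpha_n))=x$, $(\alpha_n)$ is a $g$-code of $x$. The $g$-cylinder of rank $m$ with base $c_1\dots c_m$ is $\Delta^g_{c_1\dots c_m}=\{g((c_1,\dots,c_m,\alpha_1,\alpha_2,\dots)):(\alpha_n)\in L_s\}$. The encoding has zero redundancy if every point has at most two $g$-codes and the set of points with two $g$-codes is at most countable; points with two codes are $g$-binary, points with one code are $g$-unary. The encoding is continuous if every $g$-cylinder is an interval and any two distinct cylinders of the same rank have no common interior points. *)

theory Defs
  imports "HOL-Analysis.Analysis"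
begin

text \<open>Sequences over the alphabet A_s = {0,...,s-1}, indexed from 0
  (index n corresponds to the paper's alpha_(n+1)).\<close>
definition seqs :: "nat \<Rightarrow> (nat \<Rightarrow> nat) set" where
  "seqs s = {a. \<forall>n. a n < s}"

definition encoding :: "nat \<Rightarrow> ((nat \<Rightarrow> nat) \<Rightarrow> real) \<Rightarrow> bool" where
  "encoding s g \<longleftrightarrow> g ` seqs s = {0..1}"

definition codes :: "nat \<Rightarrow> ((nat \<Rightarrow> nat) \<Rightarrow> real) \<Rightarrow> real \<Rightarrow> (nat \<Rightarrow> nat) set" where
  "codes s g x = {a \<in> seqs s. g a = x}"

definition binary_point :: "nat \<Rightarrow> ((nat \<Rightarrow> nat) \<Rightarrow> real) \<Rightarrow> real \<Rightarrow> bool" where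
  "binary_point s g x \<longleftrightarrow> finite (codes s g x) \<and> card (codes s g x) = 2"

definition zero_redundancy :: "nat \<Rightarrow> ((nat \<Rightarrow> nat) \<Rightarrow> real) \<Rightarrow> bool" where
  "zero_redundancy s g \<longleftrightarrow>
     (\<forall>x. finite (codes s g x) \<and> card (codes s g x) \<le> 2) \<and>
     countable {x. binary_point s g x}"

definition prepend :: "nat list \<Rightarrow> (nat \<Rightarrow> nat) \<Rightarrow> (nat \<Rightarrow> nat)" where
  "prepend cs a = (\<lambda>n. if n < length cs then cs ! n else a (n - length cs))"

definition cylinder :: "nat \<Rightarrow> ((nat \<Rightarrow> nat) \<Rightarrow> real) \<Rightarrow> nat list \<Rightarrow> real set" where
  "cylinder s g cs = (\<lambda>a. g (prepend cs a)) ` seqs s"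

definition continuous_encoding :: "nat \<Rightarrow> ((nat \<Rightarrow> nat) \<Rightarrow> real) \<Rightarrow> bool" where
  "continuous_encoding s g \<longleftrightarrow>
     (\<forall>cs. set cs \<subseteq> {..<s} \<longrightarrow> is_interval (cylinder s g cs)) \<and>
     (\<forall>cs ds. set cs \<subseteq> {..<s} \<longrightarrow> set ds \<subseteq> {..<s} \<longrightarrow> length cs = length ds \<longrightarrow>
        cs \<noteq> ds \<longrightarrow> interior (cylinder s g cs) \<inter> interior (cylinder s g ds) = {})"

text \<open>The digit transformation: beta_n = phi_n(alpha_1,...,alpha_n);
  with 0-based indexing beta at index k is phi (k+1) applied to the first k+1 digits.\<close>
definition transform :: "(nat \<Rightarrow> nat list \<Rightarrow> nat) \<Rightarrow> (nat \<Rightarrow> nat) \<Rightarrow> (nat \<Rightarrow> nat)" where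
  "transform \<phi> a = (\<lambda>k. \<phi> (Suc k) (map a [0..<Suc k]))"

definition psi :: "nat \<Rightarrow> ((nat \<Rightarrow> nat) \<Rightarrow> real) \<Rightarrow> ((nat \<Rightarrow> nat) \<Rightarrow> real)
                   \<Rightarrow> (nat \<Rightarrow> nat list \<Rightarrow> nat) \<Rightarrow> real \<Rightarrow> real" where
  "psi s g1 g2 \<phi> x = g2 (transform \<phi> (SOME a. a \<in> codes s g1 x))"

definition well_defined_at :: "nat \<Rightarrow> ((nat \<Rightarrow> nat) \<Rightarrow> real) \<Rightarrow> ((nat \<Rightarrow> nat) \<Rightarrow> real)
                   \<Rightarrow> (nat \<Rightarrow> nat list \<Rightarrow> nat) \<Rightarrow> real \<Rightarrow> bool" where
  "well_defined_at s g1 g2 \<phi> x \<longleftrightarrow>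
     (\<forall>a\<in>codes s g1 x. \<forall>b\<in>codes s g1 x. g2 (transform \<phi> a) = g2 (transform \<phi> b))"

end

theory Submission
  imports Defs
begin

lemma seqs_compact: "compact (seqs s)"
proof -
  have "seqs s = PiE UNIV (\<lambda>_. {..<s})" by (auto simp: seqs_def PiE_def)
  moreover have "compactin (product_topology (\<lambda>_. euclidean) UNIV) (PiE (UNIV::nat set) (\<lambda>_. {..<s}))"
    by (subst compactin_PiE) (auto intro: finite_imp_compact)
  ultimately show ?thesis by (simp add: euclidean_product_topology)
qed

lemma prefix_open: "open {b::nat\<Rightarrow>nat. \<forall>i\<in>{..<N}. b (id i) \<in> {a i}}"
  by (rule product_topology_basis') (auto simp: open_discrete)

lemma prefix_cont:
  fixes F :: "(nat \<Rightarrow> nat) \<Rightarrow> real"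
  assumes "\<And>a e. a \<in> K \<Longrightarrow> e > 0 \<Longrightarrow> \<exists>N. \<forall>b\<in>K. (\<forall>i<N. b i = a i) \<longrightarrow> \<bar>F b - F a\<bar> < e"
  shows "continuous_on K F"
  unfolding continuous_on_topological
proof (intro ballI allI impI)
  fix a B assume a: "a \<in> K" and B: "open B" "F a \<in> B"
  then obtain e where e: "e > 0" "ball (F a) e \<subseteq> B" by (meson openE)
  obtain N where N: "\<forall>b\<in>K. (\<forall>i<N. b i = a i) \<longrightarrow> \<bar>F b - F a\<bar> < e" using assms[OF a e(1)] by blast
  show "\<exists>A. open A \<and> a \<in> A \<and> (\<forall>y\<in>K. y \<in> A \<longrightarrow> F y \<in> B)"
  proof (intro exI conjI ballI impI)
    show "open {b::nat\<Rightarrow>nat. \<forall>i\<in>{..<N}. b (id i) \<in> {a i}}" by (rule prefix_open)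
    show "a \<in> {b::nat\<Rightarrow>nat. \<forall>i\<in>{..<N}. b (id i) \<in> {a i}}" by simp
    fix y assume "y \<in> K" "y \<in> {b::nat\<Rightarrow>nat. \<forall>i\<in>{..<N}. b (id i) \<in> {a i}}"
    then have "\<bar>F y - F a\<bar> < e" using N by auto
    then show "F y \<in> B" using e(2) by (auto simp: dist_real_def)
  qed
qed

lemma agree_code:
  assumes zr: "zero_redundancy s g" and a: "a \<in> seqs s" and y: "y \<noteq> g a"
  shows "\<exists>N. \<forall>b\<in>seqs s. (\<forall>i<N. b i = a i) \<longrightarrow> g b \<noteq> y"
proof -
  define F where "F = codes s g y"
  have fin: "finite F" using zr by (auto simp: zero_redundancy_def F_def)
  define idx where "idx c = (LEAST i. c i \<noteq> a i)" for c :: "nat \<Rightarrow> nat"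
  define N where "N = Suc (Max (insert 0 (idx ` F)))"
  show ?thesis
  proof (intro exI ballI impI)
    fix b assume b: "b \<in> seqs s" "\<forall>i<N. b i = a i"
    show "g b \<noteq> y"
    proof
      assume gb: "g b = y"
      then have bF: "b \<in> F" using b by (auto simp: F_def codes_def)
      have "b \<noteq> a" using gb y by auto
      then have "\<exists>i. b i \<noteq> a i" by auto
      then have d: "b (idx b) \<noteq> a (idx b)" unfolding idx_def by (rule LeastI_ex)
      have "idx b \<le> Max (insert 0 (idx ` F))" using fin bF by auto
      then have "idx b < N" unfolding N_def by simp
      then show False using b(2) d by auto
    qed
  qed
qed

lemma prepend_agree:
  assumes "\<forall>i<N. b i = a i"
  shows "prepend (map a [0..<N]) (\<lambda>n. b (n + N)) = b"
  using assms by (auto simp: prepend_def fun_eq_iff)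

lemma prepend_seqs: "set cs \<subseteq> {..<s} \<Longrightarrow> t \<in> seqs s \<Longrightarrow> prepend cs t \<in> seqs s"
  by (auto simp: prepend_def seqs_def) (meson lessThan_iff nth_mem subsetD)

lemma shrink:
  assumes zr: "zero_redundancy s g" and ce: "continuous_encoding s g"
    and a: "a \<in> seqs s" and e: "e > 0"
  shows "\<exists>N. \<forall>b\<in>seqs s. (\<forall>i<N. b i = a i) \<longrightarrow> \<bar>g b - g a\<bar> < e"
proof -
  obtain N1 where N1: "\<forall>b\<in>seqs s. (\<forall>i<N1. b i = a i) \<longrightarrow> g b \<noteq> g a + e/2"
    using agree_code[OF zr a, of "g a + e/2"] e by auto
  obtain N2 where N2: "\<forall>b\<in>seqs s. (\<forall>i<N2. b i = a i) \<longrightarrow> g b \<noteq> g a - e/2"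
    using agree_code[OF zr a, of "g a - e/2"] e by auto
  define N where "N = max N1 N2"
  define cs where "cs = map a [0..<N]"
  have cs: "set cs \<subseteq> {..<s}" using a by (auto simp: cs_def seqs_def)
  have int: "is_interval (cylinder s g cs)" using ce cs by (auto simp: continuous_encoding_def)
  have inC: "g b \<in> cylinder s g cs" if "b \<in> seqs s" "\<forall>i<N. b i = a i" for b
  proof -
    have "(\<lambda>n. b (n + N)) \<in> seqs s" using that by (auto simp: seqs_def)
    then show ?thesis unfolding cylinder_def cs_def
      using prepend_agree[OF that(2)] by (metis (no_types, lifting) image_eqI)
  qed
  have noC: "y \<notin> cylinder s g cs" if "y = g a + e/2 \<or> y = g a - e/2" for y
  proof
    assume "y \<in> cylinder s g cs"
    then obtain t where t: "t \<in> seqs s" "y = g (prepend cs t)" by (auto simp: cylinder_def)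
    have "prepend cs t \<in> seqs s" using prepend_seqs[OF cs t(1)] .
    moreover have "\<forall>i<N. prepend cs t i = a i" by (auto simp: prepend_def cs_def)
    ultimately show False using N1 N2 t(2) that unfolding N_def by auto
  qed
  show ?thesis
  proof (intro exI ballI impI)
    fix b assume b: "b \<in> seqs s" "\<forall>i<N. b i = a i"
    show "\<bar>g b - g a\<bar> < e"
    proof (rule ccontr)
      assume c: "\<not> \<bar>g b - g a\<bar> < e"
      have ga: "g a \<in> cylinder s g cs" using inC[OF a] by simp
      have gb: "g b \<in> cylinder s g cs" using inC[OF b] .
      show False
      proof (cases "g b \<ge> g a")
        case True
        then have "g a \<le> g a + e/2" "g a + e/2 \<le> g b" using c e by auto
        then have "g a + e/2 \<in> cylinder s g cs" using int ga gb unfolding is_interval_1 by blast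
        then show False using noC by blast
      next
        case False
        then have "g b \<le> g a - e/2" "g a - e/2 \<le> g a" using c e by auto
        then have "g a - e/2 \<in> cylinder s g cs" using int ga gb unfolding is_interval_1 by blast
        then show False using noC by blast
      qed
    qed
  qed
qed

lemma transform_agree:
  assumes "\<forall>i<N. b i = a i" "k < N"
  shows "transform \<phi> b k = transform \<phi> a k"
proof -
  have "map b [0..<Suc k] = map a [0..<Suc k]" using assms by (intro map_cong) auto
  then show ?thesis unfolding transform_def by metis
qed

lemma transform_seqs:
  assumes "\<And>n cs. n \<ge> 1 \<Longrightarrow> length cs = n \<Longrightarrow> set cs \<subseteq> {..<s} \<Longrightarrow> \<phi> n cs < r"
    and "a \<in> seqs s"
  shows "transform \<phi> a \<in> seqs r"
  using assms unfolding transform_def seqs_def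
  by (auto intro!: assms(1))

theorem theorem1:
  fixes s r :: nat
    and g1 g2 :: "(nat \<Rightarrow> nat) \<Rightarrow> real"
    and \<phi> :: "nat \<Rightarrow> nat list \<Rightarrow> nat"
  assumes "s \<ge> 2" and "r \<ge> 2"
    and "encoding s g1" and "zero_redundancy s g1" and "continuous_encoding s g1"
    and "encoding r g2" and "zero_redundancy r g2" and "continuous_encoding r g2"
    and "\<And>n cs. n \<ge> 1 \<Longrightarrow> length cs = n \<Longrightarrow> set cs \<subseteq> {..<s} \<Longrightarrow> \<phi> n cs < r"
  shows "((\<forall>x\<in>{0..1}. well_defined_at s g1 g2 \<phi> x) \<and> continuous_on {0..1} (psi s g1 g2 \<phi>))
         \<longleftrightarrow> (\<forall>x. binary_point s g1 x \<longrightarrow> well_defined_at s g1 g2 \<phi> x)"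
proof
  assume L: "(\<forall>x\<in>{0..1}. well_defined_at s g1 g2 \<phi> x) \<and> continuous_on {0..1} (psi s g1 g2 \<phi>)"
  show "\<forall>x. binary_point s g1 x \<longrightarrow> well_defined_at s g1 g2 \<phi> x"
  proof (intro allI impI)
    fix x assume "binary_point s g1 x"
    show "well_defined_at s g1 g2 \<phi> x"
    proof (cases "x \<in> {0..1}")
      case True then show ?thesis using L by auto
    next
      case False
      then have "codes s g1 x = {}" using assms(3) by (auto simp: codes_def encoding_def)
      then show ?thesis by (simp add: well_defined_at_def)
    qed
  qed
next
  assume R: "\<forall>x. binary_point s g1 x \<longrightarrow> well_defined_at s g1 g2 \<phi> x"
  have wd: "well_defined_at s g1 g2 \<phi> x" for x
  proof (cases "binary_point s g1 x")
    case True then show ?thesis using R by auto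
  next
    case False
    have "finite (codes s g1 x)" "card (codes s g1 x) \<le> 2"
      using assms(4) by (auto simp: zero_redundancy_def)
    then have "card (codes s g1 x) \<le> 1" using False by (auto simp: binary_point_def)
    then have "\<forall>a\<in>codes s g1 x. \<forall>b\<in>codes s g1 x. a = b"
      using \<open>finite (codes s g1 x)\<close> card_le_Suc0_iff_eq by (metis One_nat_def)
    then show ?thesis by (auto simp: well_defined_at_def)
  qed
  define K where "K = seqs s"
  define H where "H = (\<lambda>a. g2 (transform \<phi> a))"
  have g1c: "continuous_on K g1"
    by (rule prefix_cont) (use shrink[OF assms(4,5)] in \<open>auto simp: K_def\<close>)
  have Hc: "continuous_on K H"
  proof (rule prefix_cont)
    fix a e assume a: "a \<in> K" and e: "(e::real) > 0"
    have Ta: "transform \<phi> a \<in> seqs r" using transform_seqs[OF assms(9)] a by (auto simp: K_def)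
    obtain N where N: "\<forall>b\<in>seqs r. (\<forall>i<N. b i = transform \<phi> a i) \<longrightarrow> \<bar>g2 b - g2 (transform \<phi> a)\<bar> < e"
      using shrink[OF assms(7,8) Ta e] by blast
    show "\<exists>N. \<forall>b\<in>K. (\<forall>i<N. b i = a i) \<longrightarrow> \<bar>H b - H a\<bar> < e"
    proof (intro exI ballI impI)
      fix b assume b: "b \<in> K" "\<forall>i<N. b i = a i"
      have "transform \<phi> b \<in> seqs r" using transform_seqs[OF assms(9)] b by (auto simp: K_def)
      moreover have "\<forall>i<N. transform \<phi> b i = transform \<phi> a i" using transform_agree[OF b(2)] by auto
      ultimately show "\<bar>H b - H a\<bar> < e" using N by (auto simp: H_def)
    qed
  qed
  have Kc: "compact K" by (simp add: K_def seqs_compact)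
  have psi_eq: "psi s g1 g2 \<phi> x = H a" if "a \<in> K" "g1 a = x" for a x
  proof -
    have ac: "a \<in> codes s g1 x" using that by (auto simp: codes_def K_def)
    then have "(SOME a. a \<in> codes s g1 x) \<in> codes s g1 x" by (rule someI[where x=a])
    moreover have "\<forall>a\<in>codes s g1 x. \<forall>b\<in>codes s g1 x. g2 (transform \<phi> a) = g2 (transform \<phi> b)"
      using wd[of x] unfolding well_defined_at_def .
    ultimately have "g2 (transform \<phi> (SOME a. a \<in> codes s g1 x)) = g2 (transform \<phi> a)"
      using ac by blast
    then show ?thesis unfolding psi_def H_def .
  qed
  have img: "g1 ` K = {0..1}" using assms(3) by (simp add: encoding_def K_def)
  have "continuous_on {0..1} (psi s g1 g2 \<phi>)"
    unfolding continuous_on_closed_vimage[OF closed_atLeastAtMost]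
  proof (intro allI impI)
    fix B :: "real set" assume B: "closed B"
    have eq: "psi s g1 g2 \<phi> -` B \<inter> {0..1} = g1 ` (K \<inter> H -` B)"
    proof
      show "psi s g1 g2 \<phi> -` B \<inter> {0..1} \<subseteq> g1 ` (K \<inter> H -` B)"
      proof
        fix x assume x: "x \<in> psi s g1 g2 \<phi> -` B \<inter> {0..1}"
        then obtain a where a: "a \<in> K" "g1 a = x" using img by (metis IntD2 imageE)
        then show "x \<in> g1 ` (K \<inter> H -` B)" using psi_eq[OF a] x by auto
      qed
      show "g1 ` (K \<inter> H -` B) \<subseteq> psi s g1 g2 \<phi> -` B \<inter> {0..1}"
        using psi_eq img by auto
    qed
    have "closedin (top_of_set K) (K \<inter> H -` B)" by (rule continuous_closedin_preimage[OF Hc B])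
    then have "compact (K \<inter> H -` B)" using Kc closedin_compact by blast
    moreover have "continuous_on (K \<inter> H -` B) g1" using g1c continuous_on_subset by blast
    ultimately have "compact (g1 ` (K \<inter> H -` B))" by (rule compact_continuous_image[rotated])
    then show "closed (psi s g1 g2 \<phi> -` B \<inter> {0..1})" unfolding eq by (rule compact_imp_closed)
  qed
  then show "(\<forall>x\<in>{0..1}. well_defined_at s g1 g2 \<phi> x) \<and> continuous_on {0..1} (psi s g1 g2 \<phi>)"
    using wd by auto
qed

end
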